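(* Let $X$ be a locally super-compact $L$-sober space. Then $\Omega_LX$ is a continuous $L$-dcpo.
   Context: $L$ is a frame with implication $\to$. $L$-subsets: maps to $L$; nonempty: $\bigvee A=1$; ${\rm sub}_X(A,B)=\bigwedge_xA(x)\to B(x)$. $L$-topology: $\mathcal O(X)\subseteq L^X$ closed under finite meets and arbitrary joins containing all constants $a_X$; interior $A^\circ$ is the join of open sets below $A$. Super-compact: nonempty $A$ with ${\rm sub}_X(A,\bigvee_iV_i)=\bigvee_i{\rm sub}_X(A,V_i)$ for every family of open $V_i$; ${\rm SC}(X)$ their set. Locally super-compact: every open $A=\bigvee_{B\in{\rm SC}(X)}{\rm sub}_X(B,A)\wedge B^\circ$. A point of $\mathcal O(X)$: $p:\mathcal O(X)\to L$ preserving binary meets, arbitrary joins, with $p(\lambda_X)=\lambda$; $[x](A)=A(x)$; $L$-sober: $x\mapsto[x]$ bijective onto the points (in particular $X$ is $T_0$). $\Omega_LX$ is $X$ with the specialization $L$-order $e(x,y)=\bigwedge_{A\in\mathcal O(X)}A(x)\to A(y)$. For an $L$-ordered set $(P,e)$ ($e(x,x)=1$, $e(x,y)\wedge e(y,z)\le e(x,z)$, $e(x,y)\wedge e(y,x)=1\Rightarrow x=y$): ${\downarrow}y(x)=e(x,y)$; $\sqcup A=x$ iff $e(x,y)={\rm sub}_P(A,{\downarrow}y)$ for all $y$; directed: nonempty and $D(x)\wedge D(y)\le\bigvee_zD(z)\wedge e(x,z)\wedge e(y,z)$; ideal: directed lower set; $L$-dcpo: all directed $L$-subsets have suprema; ${\Downarrow}x(y)=\bigwedge\{e(x,\sqcup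 I)\to I(y):I\text{ ideal with a supremum}\}$; continuous $L$-dcpo: an $L$-dcpo in which each ${\Downarrow}x$ is directed with supremum $x$. *)

theory Defs
  imports Main
begin

class frame = complete_lattice +
  assumes inf_Sup_distrib: "inf a (Sup S) = (SUP s\<in>S. inf a s)"

definition fimp :: "'l::frame \<Rightarrow> 'l \<Rightarrow> 'l" where
  "fimp a b = Sup {c. inf c a \<le> b}"

section \<open>L-subsets (the space X is the whole type 'a)\<close>

definition Lnonempty :: "('a \<Rightarrow> 'l::frame) \<Rightarrow> bool" where
  "Lnonempty A \<longleftrightarrow> (SUP x. A x) = top"

definition Lsub :: "('a \<Rightarrow> 'l::frame) \<Rightarrow> ('a \<Rightarrow> 'l) \<Rightarrow> 'l" where
  "Lsub A B = (INF x. fimp (A x) (B x))"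

definition L_topology :: "('a \<Rightarrow> 'l::frame) set \<Rightarrow> bool" where
  "L_topology T \<longleftrightarrow>
     (\<forall>U\<in>T. \<forall>V\<in>T. inf U V \<in> T) \<and>
     (\<forall>S. S \<subseteq> T \<longrightarrow> Sup S \<in> T) \<and>
     (\<forall>a. (\<lambda>_. a) \<in> T)"

definition Linterior :: "('a \<Rightarrow> 'l::frame) set \<Rightarrow> ('a \<Rightarrow> 'l) \<Rightarrow> ('a \<Rightarrow> 'l)" where
  "Linterior T A = Sup {U \<in> T. U \<le> A}"

definition super_compact :: "('a \<Rightarrow> 'l::frame) set \<Rightarrow> ('a \<Rightarrow> 'l) \<Rightarrow> bool" where
  "super_compact T A \<longleftrightarrow> Lnonempty A \<and>
     (\<forall>(I::('a \<Rightarrow> 'l) set) V. (\<forall>i\<in>I. V i \<in> T) \<longrightarrow>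
        Lsub A (SUP i\<in>I. V i) = (SUP i\<in>I. Lsub A (V i)))"

definition locally_super_compact :: "('a \<Rightarrow> 'l::frame) set \<Rightarrow> bool" where
  "locally_super_compact T \<longleftrightarrow>
     (\<forall>A\<in>T. A = (SUP B\<in>{B. super_compact T B}. (\<lambda>x. inf (Lsub B A) (Linterior T B x))))"

definition is_point :: "('a \<Rightarrow> 'l::frame) set \<Rightarrow> (('a \<Rightarrow> 'l) \<Rightarrow> 'l) \<Rightarrow> bool" where
  "is_point T p \<longleftrightarrow>
     (\<forall>U\<in>T. \<forall>V\<in>T. p (inf U V) = inf (p U) (p V)) \<and>
     (\<forall>S. S \<subseteq> T \<longrightarrow> p (Sup S) = (SUP U\<in>S. p U)) \<and>
     (\<forall>a. p (\<lambda>_. a) = a)"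

text \<open>L-sober: the map x |-> [x] (with [x](A) = A(x), a map on the open sets)
  is a bijection from X onto the points of O(X).\<close>
definition L_sober :: "('a \<Rightarrow> 'l::frame) set \<Rightarrow> bool" where
  "L_sober T \<longleftrightarrow>
     (\<forall>x y. (\<forall>U\<in>T. U x = U y) \<longrightarrow> x = y) \<and>
     (\<forall>p. is_point T p \<longrightarrow> (\<exists>x. \<forall>U\<in>T. p U = U x))"

definition specialization :: "('a \<Rightarrow> 'l::frame) set \<Rightarrow> 'a \<Rightarrow> 'a \<Rightarrow> 'l" where
  "specialization T x y = (INF A\<in>T. fimp (A x) (A y))"

section \<open>L-ordered sets (carrier = the whole type)\<close>

definition L_order :: "('a \<Rightarrow> 'a \<Rightarrow> 'l::frame) \<Rightarrow> bool" where
  "L_order e \<longleftrightarrow> (\<forall>x. e x x = top) \<and>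
     (\<forall>x y z. inf (e x y) (e y z) \<le> e x z) \<and>
     (\<forall>x y. inf (e x y) (e y x) = top \<longrightarrow> x = y)"

definition Ldown :: "('a \<Rightarrow> 'a \<Rightarrow> 'l::frame) \<Rightarrow> 'a \<Rightarrow> ('a \<Rightarrow> 'l)" where
  "Ldown e y = (\<lambda>x. e x y)"

definition is_Lsup :: "('a \<Rightarrow> 'a \<Rightarrow> 'l::frame) \<Rightarrow> ('a \<Rightarrow> 'l) \<Rightarrow> 'a \<Rightarrow> bool" where
  "is_Lsup e A x \<longleftrightarrow> (\<forall>y. e x y = Lsub A (Ldown e y))"

definition Ldirected :: "('a \<Rightarrow> 'a \<Rightarrow> 'l::frame) \<Rightarrow> ('a \<Rightarrow> 'l) \<Rightarrow> bool" where
  "Ldirected e D \<longleftrightarrow> Lnonempty D \<and>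
     (\<forall>x y. inf (D x) (D y) \<le> (SUP z. inf (D z) (inf (e x z) (e y z))))"

definition Llower :: "('a \<Rightarrow> 'a \<Rightarrow> 'l::frame) \<Rightarrow> ('a \<Rightarrow> 'l) \<Rightarrow> bool" where
  "Llower e A \<longleftrightarrow> (\<forall>x y. inf (A x) (e y x) \<le> A y)"

definition Lideal :: "('a \<Rightarrow> 'a \<Rightarrow> 'l::frame) \<Rightarrow> ('a \<Rightarrow> 'l) \<Rightarrow> bool" where
  "Lideal e I \<longleftrightarrow> Ldirected e I \<and> Llower e I"

definition L_dcpo :: "('a \<Rightarrow> 'a \<Rightarrow> 'l::frame) \<Rightarrow> bool" where
  "L_dcpo e \<longleftrightarrow> L_order e \<and> (\<forall>D. Ldirected e D \<longrightarrow> (\<exists>x. is_Lsup e D x))"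

definition Lwaybelow :: "('a \<Rightarrow> 'a \<Rightarrow> 'l::frame) \<Rightarrow> 'a \<Rightarrow> ('a \<Rightarrow> 'l)" where
  "Lwaybelow e x = (\<lambda>y. Inf {fimp (e x s) (I y) | I s. Lideal e I \<and> is_Lsup e I s})"

definition continuous_L_dcpo :: "('a \<Rightarrow> 'a \<Rightarrow> 'l::frame) \<Rightarrow> bool" where
  "continuous_L_dcpo e \<longleftrightarrow> L_dcpo e \<and>
     (\<forall>x. Ldirected e (Lwaybelow e x) \<and> is_Lsup e (Lwaybelow e x) x)"

end

theory Submission
  imports Defs
begin

lemma inf_SUP_fr: "inf (a::'l::frame) (SUP i\<in>I. f i) = (SUP i\<in>I. inf a (f i))"
  using inf_Sup_distrib[of a "f`I"] by (simp add: image_image)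

lemma SUP_inf_fr: "inf (SUP i\<in>I. f i) (a::'l::frame) = (SUP i\<in>I. inf (f i) a)"
proof -
  have "inf (SUP i\<in>I. f i) a = inf a (SUP i\<in>I. f i)" by (rule inf_commute)
  also have "\<dots> = (SUP i\<in>I. inf a (f i))" by (rule inf_SUP_fr)
  also have "\<dots> = (SUP i\<in>I. inf (f i) a)" by (simp only: inf_commute)
  finally show ?thesis .
qed

lemma inf_SUP_SUP: "inf (SUP i\<in>I. f i) (SUP j\<in>J. (g j::'l::frame)) = (SUP i\<in>I. SUP j\<in>J. inf (f i) (g j))"
  by (simp only: SUP_inf_fr inf_SUP_fr) (rule SUP_commute)

lemma inf_SUP_le_iff: "inf (c::'l::frame) (SUP i\<in>I. f i) \<le> b \<longleftrightarrow> (\<forall>i\<in>I. inf c (f i) \<le> b)"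
  by (simp add: inf_SUP_fr SUP_le_iff)

lemma fimp_ge: "(c::'l::frame) \<le> fimp a b \<longleftrightarrow> inf c a \<le> b"
proof
  assume "inf c a \<le> b" thus "c \<le> fimp a b" unfolding fimp_def by (rule Sup_upper[OF CollectI])
next
  assume h: "c \<le> fimp a b"
  have "inf c a \<le> inf a (fimp a b)" by (metis h inf.commute inf_mono order_refl)
  also have "\<dots> = (SUP s\<in>{c. inf c a \<le> b}. inf a s)" unfolding fimp_def by (rule inf_Sup_distrib)
  also have "\<dots> \<le> b" by (auto intro!: SUP_least simp: inf_commute)
  finally show "inf c a \<le> b" .
qed

lemma spec_ge: "c \<le> specialization T x y \<longleftrightarrow> (\<forall>A\<in>T. inf c (A x) \<le> A y)"
  by (simp add: specialization_def le_INF_iff fimp_ge)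

lemma Lsub_ge: "c \<le> Lsub A B \<longleftrightarrow> (\<forall>x. inf c (A x) \<le> B x)"
  by (simp add: Lsub_def le_INF_iff fimp_ge)

lemma eq_by_le: "(\<And>c. (c::'l::order) \<le> a \<longleftrightarrow> c \<le> b) \<Longrightarrow> a = b"
  by (meson order.antisym order.refl)

lemma spec_use: "A \<in> T \<Longrightarrow> inf (A x) (specialization T x y) \<le> A y"
  using spec_ge[of "specialization T x y" T x y] by (simp add: inf_commute)

lemma spec_refl: "specialization T x x = top"
  by (rule top_le) (simp add: spec_ge)

lemma spec_trans: "inf (specialization T x y) (specialization T y z) \<le> specialization T x z"
  unfolding spec_ge
proof
  fix A assume A: "A \<in> T"
  have "inf (inf (specialization T x y) (specialization T y z)) (A x)
     = inf (inf (A x) (specialization T x y)) (specialization T y z)" by (simp add: ac_simps)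
  also have "\<dots> \<le> inf (A y) (specialization T y z)" using spec_use[OF A] inf_mono by blast
  also have "\<dots> \<le> A z" using spec_use[OF A] .
  finally show "inf (inf (specialization T x y) (specialization T y z)) (A x) \<le> A z" .
qed

context
  fixes T :: "('a \<Rightarrow> 'l::frame) set"
  assumes top: "L_topology T"
begin

lemma op_const: "(\<lambda>_. a) \<in> T" using top unfolding L_topology_def by blast
lemma op_inf: "U \<in> T \<Longrightarrow> V \<in> T \<Longrightarrow> inf U V \<in> T" using top unfolding L_topology_def by blast
lemma op_Sup: "S \<subseteq> T \<Longrightarrow> Sup S \<in> T" using top unfolding L_topology_def by blast

lemma int_open: "Linterior T A \<in> T" unfolding Linterior_def by (rule op_Sup) auto
lemma int_le: "Linterior T A \<le> A" unfolding Linterior_def by (rule Sup_least) auto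
lemma int_max: "U \<in> T \<Longrightarrow> U \<le> A \<Longrightarrow> U \<le> Linterior T A" unfolding Linterior_def by (rule Sup_upper) auto
lemma int_mono: "A \<le> B \<Longrightarrow> Linterior T A \<le> Linterior T B"
  using int_max[OF int_open] int_le order_trans by blast


lemma sc_point:
  assumes B: "super_compact T B"
  shows "is_point T (\<lambda>U. Lsub B U)"
  unfolding is_point_def
proof (intro conjI allI ballI impI)
  fix U V :: "'a \<Rightarrow> 'l"
  show "Lsub B (inf U V) = inf (Lsub B U) (Lsub B V)"
    proof (rule eq_by_le)
    fix c
    show "c \<le> Lsub B (inf U V) \<longleftrightarrow> c \<le> inf (Lsub B U) (Lsub B V)"
      unfolding Lsub_ge le_inf_iff inf_apply by blast
  qed
next
  fix S :: "('a \<Rightarrow> 'l) set" assume "S \<subseteq> T"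
  then have S: "\<forall>i\<in>S. (\<lambda>i. i) i \<in> T" by auto
  have H: "\<forall>(I::('a \<Rightarrow> 'l) set) V. (\<forall>i\<in>I. V i \<in> T) \<longrightarrow>
        Lsub B (SUP i\<in>I. V i) = (SUP i\<in>I. Lsub B (V i))"
    using B unfolding super_compact_def by (rule conjunct2)
  show "Lsub B (Sup S) = (SUP U\<in>S. Lsub B U)"
    using H apply -
    apply (drule spec[where x=S])
    apply (drule spec[where x="\<lambda>i::'a\<Rightarrow>'l. i"])
    using S by simp
next
  fix a :: 'l
  have ne: "(SUP x. B x) = top" using B unfolding super_compact_def Lnonempty_def by (rule conjunct1)
  show "Lsub B (\<lambda>_. a) = a"
  proof (rule eq_by_le)
    fix c
    have "c \<le> Lsub B (\<lambda>_. a) \<longleftrightarrow> inf c (SUP x. B x) \<le> a"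
      unfolding Lsub_ge inf_SUP_le_iff by simp
    then show "c \<le> Lsub B (\<lambda>_. a) \<longleftrightarrow> c \<le> a" using ne by simp
  qed
qed

lemma dir_point:
  assumes D: "Ldirected (specialization T) D"
  shows "is_point T (\<lambda>U. SUP z. inf (D z) (U z))"
  unfolding is_point_def
proof (intro conjI allI ballI impI)
  fix U V :: "'a \<Rightarrow> 'l" assume U: "U \<in> T" and V: "V \<in> T"
  show "(SUP z. inf (D z) (inf U V z)) = inf (SUP z. inf (D z) (U z)) (SUP z. inf (D z) (V z))"
  proof (rule order.antisym)
    show "(SUP z. inf (D z) (inf U V z)) \<le> inf (SUP z. inf (D z) (U z)) (SUP z. inf (D z) (V z))"
      unfolding inf_apply by (rule le_infI; rule SUP_mono'; rule inf_mono; simp)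
  next
    have "inf (SUP z. inf (D z) (U z)) (SUP z. inf (D z) (V z)) = (SUP x. SUP y. inf (inf (D x) (U x)) (inf (D y) (V y)))"
      by (rule inf_SUP_SUP)
    also have "\<dots> \<le> (SUP z. inf (D z) (inf U V z))"
    proof (intro SUP_least)
      fix x y
      have "inf (inf (D x) (U x)) (inf (D y) (V y)) = inf (inf (D x) (D y)) (inf (U x) (V y))"
        by (simp add: ac_simps)
      also have "\<dots> \<le> inf (SUP z. inf (D z) (inf (specialization T x z) (specialization T y z))) (inf (U x) (V y))"
        using D unfolding Ldirected_def by (meson inf_mono order_refl)
      also have "\<dots> = (SUP z. inf (inf (D z) (inf (specialization T x z) (specialization T y z))) (inf (U x) (V y)))"
        by (rule SUP_inf_fr)
      also have "\<dots> \<le> (SUP z. inf (D z) (inf U V z))"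
      proof (rule SUP_mono')
        fix z
        have a: "inf (U x) (specialization T x z) \<le> U z" using spec_use[OF U] .
        have b: "inf (V y) (specialization T y z) \<le> V z" using spec_use[OF V] .
        have "inf (inf (D z) (inf (specialization T x z) (specialization T y z))) (inf (U x) (V y))
           = inf (D z) (inf (inf (U x) (specialization T x z)) (inf (V y) (specialization T y z)))"
          by (simp add: ac_simps)
        also have "\<dots> \<le> inf (D z) (inf U V z)" by (simp only: inf_apply) (rule inf_mono[OF order_refl inf_mono[OF a b]])
        finally show "inf (inf (D z) (inf (specialization T x z) (specialization T y z))) (inf (U x) (V y)) \<le> inf (D z) (inf U V z)" .
      qed
      finally show "inf (inf (D x) (U x)) (inf (D y) (V y)) \<le> (SUP z. inf (D z) (inf U V z))" .
    qed
    finally show "inf (SUP z. inf (D z) (U z)) (SUP z. inf (D z) (V z)) \<le> (SUP z. inf (D z) (inf U V z))" .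
  qed
next
  fix S :: "('a \<Rightarrow> 'l) set"
  have "(SUP z. inf (D z) (Sup S z)) = (SUP z. SUP U\<in>S. inf (D z) (U z))"
    unfolding Sup_apply by (simp only: inf_SUP_fr image_image)
  also have "\<dots> = (SUP U\<in>S. SUP z. inf (D z) (U z))" by (rule SUP_commute)
  finally show "(SUP z. inf (D z) (Sup S z)) = (SUP U\<in>S. SUP z. inf (D z) (U z))" .
next
  fix a :: 'l
  have ne: "(SUP x. D x) = top" using D unfolding Ldirected_def Lnonempty_def by blast
  have "(SUP z. inf (D z) a) = inf (SUP z. D z) a" by (rule SUP_inf_fr[symmetric])
  then show "(SUP z. inf (D z) ((\<lambda>_. a) z)) = a" using ne by simp
qed


lemma dir_sup:
  assumes sob: "L_sober T" and D: "Ldirected (specialization T) D"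
  shows "\<exists>s. is_Lsup (specialization T) D s \<and> (\<forall>U\<in>T. U s = (SUP z. inf (D z) (U z)))"
proof -
  obtain s where s: "\<forall>U\<in>T. (SUP z. inf (D z) (U z)) = U s"
    using sob dir_point[OF D] unfolding L_sober_def by blast
  have "is_Lsup (specialization T) D s"
    unfolding is_Lsup_def
  proof
    fix w
    show "specialization T s w = Lsub D (Ldown (specialization T) w)"
    proof (rule eq_by_le)
      fix c
      have "c \<le> specialization T s w \<longleftrightarrow> (\<forall>A\<in>T. \<forall>z. inf c (inf (D z) (A z)) \<le> A w)"
        unfolding spec_ge using s by (metis (no_types, lifting) inf_SUP_le_iff UNIV_I)
      also have "\<dots> \<longleftrightarrow> (\<forall>z. \<forall>A\<in>T. inf (inf c (D z)) (A z) \<le> A w)"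
        by (auto simp: inf_assoc)
      also have "\<dots> \<longleftrightarrow> c \<le> Lsub D (Ldown (specialization T) w)"
        unfolding Lsub_ge Ldown_def spec_ge ..
      finally show "c \<le> specialization T s w \<longleftrightarrow> c \<le> Lsub D (Ldown (specialization T) w)" .
    qed
  qed
  then show ?thesis using s by auto
qed

end


context
  fixes T :: "('a \<Rightarrow> 'l::frame) set"
  assumes top: "L_topology T" and lsc: "locally_super_compact T" and sob: "L_sober T"
begin

abbreviation "sp \<equiv> specialization T"

lemma lsc_exp: "A \<in> T \<Longrightarrow> A x = (SUP B\<in>{B. super_compact T B}. inf (Lsub B A) (Linterior T B x))"
proof -
  assume A: "A \<in> T"
  have "A = (SUP B\<in>{B. super_compact T B}. (\<lambda>x. inf (Lsub B A) (Linterior T B x)))"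
    using lsc A unfolding locally_super_compact_def by blast
  then have "A x = (SUP B\<in>{B. super_compact T B}. (\<lambda>x. inf (Lsub B A) (Linterior T B x))) x" by simp
  then show ?thesis by (simp only: SUP_apply)
qed

lemma lsc_le: "A \<in> T \<Longrightarrow> (\<And>B. super_compact T B \<Longrightarrow> inf (Lsub B A) (Linterior T B x) \<le> b) \<Longrightarrow> A x \<le> b"
  using lsc_exp by (metis (no_types, lifting) SUP_least mem_Collect_eq)

lemma sc_y:
  assumes B: "super_compact T B"
  obtains y where "\<forall>U\<in>T. Lsub B U = U y" "\<forall>z. B z \<le> sp y z"
proof -
  obtain y where y: "\<forall>U\<in>T. Lsub B U = U y"
    using sob sc_point[OF top B] unfolding L_sober_def by blast
  have "\<forall>z. B z \<le> sp y z"
  proof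
    fix z
    show "B z \<le> sp y z" unfolding spec_ge
    proof
      fix A assume A: "A \<in> T"
      have "Lsub B A \<le> Lsub B A" by simp
      then have "inf (Lsub B A) (B z) \<le> A z" unfolding Lsub_ge by blast
      then show "inf (B z) (A y) \<le> A z" using y A by (simp add: inf_commute)
    qed
  qed
  then show ?thesis using that y by blast
qed

lemma int_B: "\<forall>z. B z \<le> sp y z \<Longrightarrow> Linterior T B x \<le> Linterior T (\<lambda>z. sp y z) x"
  using int_mono[OF top, of B "\<lambda>z. sp y z"] by (simp add: le_fun_def)

lemma sp_order: "L_order sp"
  unfolding L_order_def
proof (intro conjI allI impI)
  fix x show "sp x x = top" by (rule spec_refl)
next
  fix x y z show "inf (sp x y) (sp y z) \<le> sp x z" by (rule spec_trans)
next
  fix x y assume h: "inf (sp x y) (sp y x) = top"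
  have "\<forall>U\<in>T. U x = U y"
  proof
    fix U assume U: "U \<in> T"
    have "sp x y = top" "sp y x = top" using h by (simp_all add: inf_eq_top_iff)
    then have "U x \<le> U y" "U y \<le> U x" using spec_use[OF U, of x y] spec_use[OF U, of y x] by simp_all
    then show "U x = U y" by simp
  qed
  then show "x = y" using sob unfolding L_sober_def by blast
qed

definition "wb x = (\<lambda>y. Linterior T (\<lambda>z. sp y z) x)"

lemma wb_le: "wb x y \<le> sp y x"
  unfolding wb_def using int_le[OF top, of "\<lambda>z. sp y z"] by (simp add: le_fun_def)

lemma wb_open: "Linterior T (\<lambda>z. sp y z) \<in> T" by (rule int_open[OF top])

lemma wb_lower: "Llower sp (wb x)"
  unfolding Llower_def
proof (intro allI)
  fix a b
  let ?U = "inf (\<lambda>_. sp b a) (Linterior T (\<lambda>z. sp a z))"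
  have U: "?U \<in> T" by (rule op_inf[OF top op_const[OF top] wb_open])
  have "?U \<le> (\<lambda>z. sp b z)"
  proof (rule le_funI)
    fix z
    have "inf (sp b a) (Linterior T (\<lambda>z. sp a z) z) \<le> inf (sp b a) (sp a z)"
      by (rule inf_mono[OF order_refl le_funD[OF int_le[OF top]]])
    also have "\<dots> \<le> sp b z" by (rule spec_trans)
    finally show "?U z \<le> sp b z" by simp
  qed
  then have "?U \<le> Linterior T (\<lambda>z. sp b z)" by (rule int_max[OF top U])
  then have "?U x \<le> wb x b" unfolding wb_def by (simp add: le_fun_def)
  then show "inf (wb x a) (sp b a) \<le> wb x b" by (simp add: wb_def inf_commute)
qed

lemma wb_nonempty: "Lnonempty (wb x)"
  unfolding Lnonempty_def
proof (rule top_le)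
  have "(\<lambda>_. top) x \<le> (SUP y. wb x y)"
  proof (rule lsc_le[OF op_const[OF top]])
    fix B assume B: "super_compact T B"
    obtain y where "\<forall>z. B z \<le> sp y z" using sc_y[OF B] by blast
    then have "Linterior T B x \<le> wb x y" unfolding wb_def by (rule int_B)
    then show "inf (Lsub B (\<lambda>_. top)) (Linterior T B x) \<le> (SUP y. wb x y)"
      by (meson SUP_upper2 UNIV_I le_infI2)
  qed
  then show "top \<le> (SUP y. wb x y)" by simp
qed

lemma wb_directed: "Ldirected sp (wb x)"
  unfolding Ldirected_def
proof (intro conjI allI)
  show "Lnonempty (wb x)" by (rule wb_nonempty)
next
  fix a b
  let ?U = "inf (Linterior T (\<lambda>z. sp a z)) (Linterior T (\<lambda>z. sp b z))"
  have U: "?U \<in> T" by (rule op_inf[OF top wb_open wb_open])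
  have "?U x \<le> (SUP z. inf (wb x z) (inf (sp a z) (sp b z)))"
  proof (rule lsc_le[OF U])
    fix B assume B: "super_compact T B"
    obtain y where y1: "\<forall>U\<in>T. Lsub B U = U y" and y2: "\<forall>z. B z \<le> sp y z" using sc_y[OF B] by blast
    have "Linterior T B x \<le> wb x y" unfolding wb_def using y2 by (rule int_B)
    moreover have "Lsub B ?U \<le> inf (sp a y) (sp b y)"
      using y1 U inf_mono[OF le_funD[OF int_le[OF top, of "\<lambda>z. sp a z"]] le_funD[OF int_le[OF top, of "\<lambda>z. sp b z"]]]
      by simp
    ultimately have "inf (Lsub B ?U) (Linterior T B x) \<le> inf (wb x y) (inf (sp a y) (sp b y))"
      by (meson le_inf_iff order_trans inf_le1 inf_le2)
    then show "inf (Lsub B ?U) (Linterior T B x) \<le> (SUP z. inf (wb x z) (inf (sp a z) (sp b z)))"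
      by (meson SUP_upper2 UNIV_I)
  qed
  then show "inf (wb x a) (wb x b) \<le> (SUP z. inf (wb x z) (inf (sp a z) (sp b z)))"
    by (simp add: wb_def)
qed

lemma wb_sup: "is_Lsup sp (wb x) x"
  unfolding is_Lsup_def
proof
  fix w
  show "sp x w = Lsub (wb x) (Ldown sp w)"
  proof (rule order.antisym)
    show "sp x w \<le> Lsub (wb x) (Ldown sp w)"
      unfolding Lsub_ge Ldown_def
    proof
      fix y
      have "inf (sp x w) (wb x y) \<le> inf (sp y x) (sp x w)"
        using wb_le[of x y] by (meson le_inf_iff order_trans inf_le1 inf_le2)
      also have "\<dots> \<le> sp y w" by (rule spec_trans)
      finally show "inf (sp x w) (wb x y) \<le> sp y w" .
    qed
  next
    let ?c = "Lsub (wb x) (Ldown sp w)"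
    show "?c \<le> sp x w"
      unfolding spec_ge
    proof
      fix A assume A: "A \<in> T"
      have "A x \<le> fimp ?c (A w)"
      proof (rule lsc_le[OF A])
        fix B assume B: "super_compact T B"
        obtain y where y1: "\<forall>U\<in>T. Lsub B U = U y" and y2: "\<forall>z. B z \<le> sp y z" using sc_y[OF B] by blast
        have i: "Linterior T B x \<le> wb x y" unfolding wb_def using y2 by (rule int_B)
        have c: "inf ?c (wb x y) \<le> sp y w"
          using order_refl[of ?c] unfolding Lsub_ge Ldown_def by blast
        have "inf (inf (Lsub B A) (Linterior T B x)) ?c \<le> inf (A y) (inf ?c (wb x y))"
          using y1 A i by (simp add: inf_mono le_infI1 le_infI2 inf_commute)
        also have "\<dots> \<le> inf (A y) (sp y w)" using c by (rule inf_mono[OF order_refl])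
        also have "\<dots> \<le> A w" by (rule spec_use[OF A])
        finally show "inf (Lsub B A) (Linterior T B x) \<le> fimp ?c (A w)" unfolding fimp_ge .
      qed
      then show "inf ?c (A x) \<le> A w" unfolding fimp_ge[symmetric] by (simp add: fimp_ge inf_commute)
    qed
  qed
qed


lemma wb_below:
  assumes J: "Lideal sp J" and s: "is_Lsup sp J s"
  shows "wb x y \<le> fimp (sp x s) (J y)"
  unfolding fimp_ge
proof -
  let ?V = "Linterior T (\<lambda>z. sp y z)"
  have V: "?V \<in> T" by (rule wb_open)
  have Jd: "Ldirected sp J" and Jl: "Llower sp J" using J unfolding Lideal_def by auto
  obtain s' where s': "\<forall>U\<in>T. U s' = (SUP z. inf (J z) (U z))"
    using dir_sup[OF top sob Jd] by blast
  have "top \<le> Lsub J (Ldown sp s')"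
    unfolding Lsub_ge Ldown_def
  proof
    fix z
    show "inf top (J z) \<le> sp z s'"
      unfolding spec_ge
    proof
      fix A assume A: "A \<in> T"
      have "inf (inf top (J z)) (A z) \<le> (SUP z. inf (J z) (A z))"
        using SUP_upper[of z UNIV "\<lambda>z. inf (J z) (A z)"] by simp
      then show "inf (inf top (J z)) (A z) \<le> A s'" using s' A by simp
    qed
  qed
  then have top': "sp s s' = top" using s unfolding is_Lsup_def by (simp add: top_le)
  have "inf (wb x y) (sp x s) \<le> ?V s" unfolding wb_def by (rule spec_use[OF V])
  also have "\<dots> \<le> ?V s'" using spec_use[OF V, of s s'] top' by simp
  also have "\<dots> = (SUP z. inf (J z) (?V z))" using s' V by blast
  also have "\<dots> \<le> J y"
  proof (rule SUP_least)
    fix z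
    have "inf (J z) (?V z) \<le> inf (J z) (sp y z)"
      by (rule inf_mono[OF order_refl le_funD[OF int_le[OF top]]])
    also have "\<dots> \<le> J y" using Jl unfolding Llower_def by blast
    finally show "inf (J z) (?V z) \<le> J y" .
  qed
  finally show "inf (wb x y) (sp x s) \<le> J y" .
qed

lemma fimp_top: "fimp top (a::'l) = a"
  by (rule eq_by_le) (simp add: fimp_ge)

lemma wb_eq: "Lwaybelow sp x = wb x"
proof (rule ext, rule order.antisym)
  fix y
  have "Lideal sp (wb x)" unfolding Lideal_def using wb_directed wb_lower by blast
  then have "fimp (sp x x) (wb x y) \<in> {fimp (sp x s) (I y) | I s. Lideal sp I \<and> is_Lsup sp I s}"
    using wb_sup by blast
  then have "Lwaybelow sp x y \<le> fimp (sp x x) (wb x y)"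
    unfolding Lwaybelow_def by (rule Inf_lower)
  then show "Lwaybelow sp x y \<le> wb x y" by (simp add: spec_refl fimp_top)
next
  fix y
  show "wb x y \<le> Lwaybelow sp x y"
    unfolding Lwaybelow_def by (rule Inf_greatest) (auto intro: wb_below)
qed

end

theorem proposition4p6:
  fixes T :: "('a \<Rightarrow> 'l::frame) set"
  assumes "L_topology T"
    and "locally_super_compact T"
    and "L_sober T"
  shows "continuous_L_dcpo (specialization T)"
  unfolding continuous_L_dcpo_def L_dcpo_def
proof (intro conjI allI impI)
  show "L_order (specialization T)" by (rule sp_order[OF assms])
next
  fix D assume "Ldirected (specialization T) D"
  then show "\<exists>x. is_Lsup (specialization T) D x" using dir_sup[OF assms(1) assms(3)] by blast
next
  fix x
  show "Ldirected (specialization T) (Lwaybelow (specialization T) x)"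
    using wb_eq[OF assms] wb_directed[OF assms] by simp
next
  fix x
  show "is_Lsup (specialization T) (Lwaybelow (specialization T) x) x"
    using wb_eq[OF assms] wb_sup[OF assms] by simp
qed

end
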